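(* Let $\mathcal{M}=(E,\rho)$ be a $q$-matroid, $E_1=\mathrm{cyc}(E)$, and $E_2\le E$ with $E_1\oplus E_2=E$. Let $\mathcal{M}_i=\mathcal{M}|_{E_i}$ for $i=1,2$. Then (a) $\mathcal{M}_2$ is the free $q$-matroid on $E_2$; (b) $\mathcal{Z}(\mathcal{M})=\mathcal{Z}(\mathcal{M}_1)$; (c) $\mathcal{M}=\mathcal{M}_1\oplus\mathcal{M}_2$.
   Context: Let $\mathbb{F}=\mathbb{F}_q$. A $q$-matroid is $\mathcal{M}=(E,\rho)$, $E$ a finite-dimensional $\mathbb{F}$-vector space, $\rho$ from subspaces to $\mathbb{Z}_{\ge0}$ with $0\le\rho(V)\le\dim V$, monotone and submodular. The restriction $\mathcal{M}|_X$ is $(X,\rho|_{\mathcal{L}(X)})$. Free $q$-matroid on $E_2$: $\rho(V)=\dim V$ for all $V\le E_2$. Flat: $\rho(F+\langle x\rangle)>\rho(F)$ for all $x\notin F$. Cyclic core: $\mathrm{cyc}(V)=\{x\in V\mid\rho(W)=\rho(V)\text{ for all }W\le V\text{ with }W+\langle x\rangle=V\}$; cyclic: $\mathrm{cyc}(V)=V$; $\mathcal{Z}(\mathcal{M})$: the set of cyclic flats. $\mathcal{M}=\mathcal{M}_1\oplus\mathcal{M}_2$ means $E=E_1\oplus E_2$ and $\rho(V)=\dim V+\min_{X\le V}(\rho_1(\pi_1(X))+\rho_2(\pi_2(X))-\dim X)$ for all $V$, where $\rho_i$ is the rank function of $\mathcal{M}_i$ and $\pi_i:E\to E_i$ the projections.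 *)

theory Defs
  imports Complex_Main
begin

text \<open>Vector spaces over a field 'f are given by a scalar multiplication
  scale :: 'f => 'v => 'v satisfying the locale vector_space.
  The ambient space E of a q-matroid is a finite-dimensional subspace (a set of vectors),
  its subspaces are the subspaces of the vector space contained in E.\<close>

definition qsubsp :: "('f::field \<Rightarrow> 'v::ab_group_add \<Rightarrow> 'v) \<Rightarrow> 'v set \<Rightarrow> 'v set \<Rightarrow> bool" where
  "qsubsp scale E V \<longleftrightarrow> module.subspace scale V \<and> V \<subseteq> E"

definition qplus :: "('f::field \<Rightarrow> 'v::ab_group_add \<Rightarrow> 'v) \<Rightarrow> 'v set \<Rightarrow> 'v set \<Rightarrow> 'v set" where
  "qplus scale V W = module.span scale (V \<union> W)"

definition qdim :: "('f::field \<Rightarrow> 'v::ab_group_add \<Rightarrow> 'v) \<Rightarrow> 'v set \<Rightarrow> nat" where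
  "qdim scale V = vector_space.dim scale V"

text \<open>q-matroid (E, rho) over the field 'f (required to be finite, i.e. F = F_q).\<close>
definition is_qmatroid :: "('f::field \<Rightarrow> 'v::ab_group_add \<Rightarrow> 'v) \<Rightarrow> 'v set \<Rightarrow> ('v set \<Rightarrow> nat) \<Rightarrow> bool" where
  "is_qmatroid scale E \<rho> \<longleftrightarrow>
     vector_space scale \<and> finite (UNIV :: 'f set) \<and>
     module.subspace scale E \<and> (\<exists>B. finite B \<and> module.span scale B = E) \<and>
     (\<forall>V. qsubsp scale E V \<longrightarrow> 0 \<le> \<rho> V \<and> \<rho> V \<le> qdim scale V) \<and>
     (\<forall>V W. qsubsp scale E V \<and> qsubsp scale E W \<and> V \<subseteq> W \<longrightarrow> \<rho> V \<le> \<rho> W) \<and>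
     (\<forall>V W. qsubsp scale E V \<and> qsubsp scale E W \<longrightarrow>
        \<rho> (qplus scale V W) + \<rho> (V \<inter> W) \<le> \<rho> V + \<rho> W)"

definition is_free_qmatroid :: "('f::field \<Rightarrow> 'v::ab_group_add \<Rightarrow> 'v) \<Rightarrow> 'v set \<Rightarrow> ('v set \<Rightarrow> nat) \<Rightarrow> bool" where
  "is_free_qmatroid scale E \<rho> \<longleftrightarrow> (\<forall>V. qsubsp scale E V \<longrightarrow> \<rho> V = qdim scale V)"

definition qflat :: "('f::field \<Rightarrow> 'v::ab_group_add \<Rightarrow> 'v) \<Rightarrow> 'v set \<Rightarrow> ('v set \<Rightarrow> nat) \<Rightarrow> 'v set \<Rightarrow> bool" where
  "qflat scale E \<rho> F \<longleftrightarrow> qsubsp scale E F \<and>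
     (\<forall>x \<in> E - F. \<rho> (qplus scale F (module.span scale {x})) > \<rho> F)"

definition qcyc :: "('f::field \<Rightarrow> 'v::ab_group_add \<Rightarrow> 'v) \<Rightarrow> ('v set \<Rightarrow> nat) \<Rightarrow> 'v set \<Rightarrow> 'v set" where
  "qcyc scale \<rho> V = {x \<in> V. \<forall>W. module.subspace scale W \<and> W \<subseteq> V \<and>
        qplus scale W (module.span scale {x}) = V \<longrightarrow> \<rho> W = \<rho> V}"

definition qcyclic :: "('f::field \<Rightarrow> 'v::ab_group_add \<Rightarrow> 'v) \<Rightarrow> ('v set \<Rightarrow> nat) \<Rightarrow> 'v set \<Rightarrow> bool" where
  "qcyclic scale \<rho> V \<longleftrightarrow> qcyc scale \<rho> V = V"

definition qcyclic_flats :: "('f::field \<Rightarrow> 'v::ab_group_add \<Rightarrow> 'v) \<Rightarrow> 'v set \<Rightarrow> ('v set \<Rightarrow> nat) \<Rightarrow> 'v set set" where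
  "qcyclic_flats scale E \<rho> = {F. qflat scale E \<rho> F \<and> qcyclic scale \<rho> F}"

definition qdirect_sum :: "('f::field \<Rightarrow> 'v::ab_group_add \<Rightarrow> 'v) \<Rightarrow> 'v set \<Rightarrow> 'v set \<Rightarrow> 'v set \<Rightarrow> bool" where
  "qdirect_sum scale E E1 E2 \<longleftrightarrow> qsubsp scale E E1 \<and> qsubsp scale E E2 \<and>
     E1 \<inter> E2 = {0} \<and> qplus scale E1 E2 = E"

definition qproj1 :: "'v::ab_group_add set \<Rightarrow> 'v set \<Rightarrow> 'v \<Rightarrow> 'v" where
  "qproj1 E1 E2 v = (THE a. a \<in> E1 \<and> (\<exists>b \<in> E2. v = a + b))"

definition qproj2 :: "'v::ab_group_add set \<Rightarrow> 'v set \<Rightarrow> 'v \<Rightarrow> 'v" where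
  "qproj2 E1 E2 v = (THE b. b \<in> E2 \<and> (\<exists>a \<in> E1. v = a + b))"

definition is_qmatroid_direct_sum ::
  "('f::field \<Rightarrow> 'v::ab_group_add \<Rightarrow> 'v) \<Rightarrow> 'v set \<Rightarrow> ('v set \<Rightarrow> nat) \<Rightarrow>
   'v set \<Rightarrow> ('v set \<Rightarrow> nat) \<Rightarrow> 'v set \<Rightarrow> ('v set \<Rightarrow> nat) \<Rightarrow> bool" where
  "is_qmatroid_direct_sum scale E \<rho> E1 \<rho>1 E2 \<rho>2 \<longleftrightarrow>
     qdirect_sum scale E E1 E2 \<and>
     (\<forall>V. qsubsp scale E V \<longrightarrow>
        int (\<rho> V) = int (qdim scale V) +
          Min {int (\<rho>1 (qproj1 E1 E2 ` X)) + int (\<rho>2 (qproj2 E1 E2 ` X)) - int (qdim scale X)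
               | X. qsubsp scale V X})"

end

theory Submission
  imports Defs
begin


context vector_space begin

lemma basis_fin:
  assumes "V \<subseteq> span T" "finite T"
  obtains B where "B \<subseteq> V" "independent B" "V \<subseteq> span B" "finite B" "card B = dim V"
  by (metis assms basis_exists independent_span_bound span_mono span_span subset_trans)

lemma indep_card_le:
  assumes "independent B" "B \<subseteq> V" "V \<subseteq> span T" "finite T"
  shows "finite B \<and> card B \<le> dim V"
proof -
  obtain C where C: "C \<subseteq> V" "independent C" "V \<subseteq> span C" "finite C" "card C = dim V"
    using basis_fin assms(3,4) by blast
  show ?thesis using independent_span_bound[OF C(4) assms(1)] assms(2) C by auto
qed

lemma dim_mono_fd:
  assumes "S \<subseteq> span V" "V \<subseteq> span T" "finite T"
  shows "dim S \<le> dim V"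
proof -
  obtain C where C: "C \<subseteq> V" "independent C" "V \<subseteq> span C" "finite C" "card C = dim V"
    using basis_fin assms(2,3) by blast
  have "S \<subseteq> span C" using assms(1) C(3) by (metis span_mono span_span subset_trans)
  then show ?thesis using dim_le_card[of S C] C by metis
qed

lemma dim_insert_le:
  assumes "V \<subseteq> span T" "finite T"
  shows "dim (insert y V) \<le> dim V + 1"
proof -
  obtain C where C: "C \<subseteq> V" "independent C" "V \<subseteq> span C" "finite C" "card C = dim V"
    using basis_fin assms by blast
  have "insert y V \<subseteq> span (insert y C)"
    using C(3) span_mono[of C "insert y C"] span_base[of y "insert y C"] by auto
  then have "dim (insert y V) \<le> card (insert y C)" using dim_le_card C(4) by auto
  also have "\<dots> \<le> card C + 1" by (simp add: card_insert_le_m1 C(4) card_insert_if)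
  finally show ?thesis using C(5) by simp
qed

lemma dim_insert_less:
  assumes "V \<subseteq> U" "subspace U" "y \<in> U" "y \<notin> span V" "U \<subseteq> span T" "finite T"
  shows "dim V < dim U"
proof -
  have VT: "V \<subseteq> span T" using assms by auto
  obtain C where C: "C \<subseteq> V" "independent C" "V \<subseteq> span C" "finite C" "card C = dim V"
    using basis_fin VT assms(6) by blast
  have yC: "y \<notin> span C" using assms(4) C(1) span_mono by blast
  have "independent (insert y C)" using independent_insertI yC C(2) by blast
  moreover have "insert y C \<subseteq> U" using C(1) assms(1,3) by auto
  ultimately have "card (insert y C) \<le> dim U" using indep_card_le assms(5,6) by blast
  moreover have "y \<notin> C" using yC span_base by blast
  ultimately show ?thesis using C by simp
qed

lemma dim_zero: "dim {0} = 0"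
  using dim_le_card[of "{0}" "{}"] by simp

lemma extend_fin:
  assumes "X \<subseteq> V" "V \<subseteq> span T" "finite T"
  obtains BX BV where "BX \<subseteq> BV" "BX \<subseteq> X" "BV \<subseteq> V" "independent BV" "X \<subseteq> span BX"
     "V \<subseteq> span BV" "finite BV" "card BX = dim X" "card BV = dim V"
proof -
  obtain BX where BX: "BX \<subseteq> X" "independent BX" "X \<subseteq> span BX" "finite BX" "card BX = dim X"
    using basis_fin[of X T] assms by blast
  obtain BV where BV: "BX \<subseteq> BV" "BV \<subseteq> V" "independent BV" "V \<subseteq> span BV"
    using maximal_independent_subset_extend[of BX V] BX assms(1) by blast
  have "finite BV \<and> card BV \<le> dim V" using indep_card_le BV assms by blast
  moreover have "card BV = dim V" using basis_card_eq_dim BV by blast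
  ultimately show ?thesis using that BX BV by blast
qed

lemma span_union_span: "span (A \<union> span B) = span (A \<union> B)"
proof
  show "span (A \<union> span B) \<subseteq> span (A \<union> B)"
  proof (rule span_minimal)
    show "A \<union> span B \<subseteq> span (A \<union> B)"
      using span_superset[of "A \<union> B"] span_mono[of B "A \<union> B"] by blast
  qed (rule subspace_span)
  show "span (A \<union> B) \<subseteq> span (A \<union> span B)"
    by (simp add: span_mono span_superset sup.coboundedI2)
qed

lemma span_insert_subspace:
  assumes "subspace W"
  shows "span (W \<union> span {x}) = span (insert x W)"
  using span_union_span[of W "{x}"] by simp

lemma dim_modular:
  assumes "subspace V" "subspace W" "V \<subseteq> span T" "W \<subseteq> span T" "finite T"
  shows "dim V + dim W \<le> dim (span (V \<union> W)) + dim (V \<inter> W)"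
proof -
  have I: "V \<inter> W \<subseteq> V" by auto
  obtain B0 BV where B: "B0 \<subseteq> BV" "B0 \<subseteq> V \<inter> W" "BV \<subseteq> V" "independent BV" "V \<inter> W \<subseteq> span B0"
     "V \<subseteq> span BV" "finite BV" "card B0 = dim (V \<inter> W)" "card BV = dim V"
    using extend_fin[OF I assms(3,5)] by blast
  obtain BW where BW: "BW \<subseteq> W" "independent BW" "W \<subseteq> span BW" "finite BW" "card BW = dim W"
    using basis_fin assms(4,5) by blast
  let ?D = "BV - B0"
  have key: "D \<subseteq> ?D \<Longrightarrow> independent (BW \<union> D) \<and> BW \<inter> D = {}" for D
  proof -
    assume DD: "D \<subseteq> ?D"
    have "finite D" using DD B(7) finite_subset by blast
    then show ?thesis using DD
    proof (induction D rule: finite_induct)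
      case empty then show ?case using BW by simp
    next
      case (insert b D)
      have bV: "b \<in> BV" "b \<notin> B0" using insert by auto
      have nsp: "b \<notin> span (BW \<union> D)"
      proof
        assume "b \<in> span (BW \<union> D)"
        then obtain w d where wd: "w \<in> span BW" "d \<in> span D" "b = w + d"
          using span_Un by blast
        have "w \<in> W" using wd(1) BW(1) assms(2) span_minimal by blast
        moreover have "D \<subseteq> V" using insert B(3) by auto
        then have "d \<in> V" using wd(2) assms(1) span_minimal by blast
        moreover have "b \<in> V" using bV B(3) by auto
        ultimately have "w \<in> V \<inter> W" using wd(3) subspace_diff[OF assms(1), of b d] by (simp add: algebra_simps)
        then have "w \<in> span B0" using B(5) by auto
        then have "b \<in> span (B0 \<union> D)"
          using wd span_Un by blast
        moreover have "B0 \<union> D \<subseteq> BV - {b}" using insert bV B(1) by auto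
        ultimately have "b \<in> span (BV - {b})" using span_mono by blast
        then show False using B(4) bV(1) dependent_def by blast
      qed
      have "b \<notin> BW" using nsp span_base by blast
      then show ?case using insert nsp independent_insertI[of b "BW \<union> D"] by auto
    qed
  qed
  have K: "independent (BW \<union> ?D)" "BW \<inter> ?D = {}" using key by auto
  have "BW \<union> ?D \<subseteq> span (V \<union> W)" using BW(1) B(3) span_superset by blast
  moreover have "span (V \<union> W) \<subseteq> span T" using assms
    by (metis Un_least span_minimal span_span subspace_span)
  ultimately have "card (BW \<union> ?D) \<le> dim (span (V \<union> W))"
    using indep_card_le[OF K(1)] assms(5) by blast
  moreover have "card (BW \<union> ?D) = card BW + card ?D" using K(2) BW(4) B(7) card_Un_disjoint by blast
  moreover have "card ?D = card BV - card B0" using B(1,7) card_Diff_subset finite_subset by blast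
  moreover have "card B0 \<le> card BV" using B(1,7) card_mono by blast
  ultimately show ?thesis using B(8,9) BW(5) by linarith
qed

end



locale qm = vector_space scale for scale :: "'f::field \<Rightarrow> 'v::ab_group_add \<Rightarrow> 'v" +
  fixes E E1 E2 :: "'v set" and \<rho> :: "'v set \<Rightarrow> nat" and B0 :: "'v set"
  assumes B0: "finite B0" "span B0 = E"
  and subE: "subspace E"
  and dimle: "\<And>V. subspace V \<Longrightarrow> V \<subseteq> E \<Longrightarrow> \<rho> V \<le> dim V"
  and mono: "\<And>V W. subspace V \<Longrightarrow> subspace W \<Longrightarrow> W \<subseteq> E \<Longrightarrow> V \<subseteq> W \<Longrightarrow> \<rho> V \<le> \<rho> W"
  and submod: "\<And>V W. subspace V \<Longrightarrow> V \<subseteq> E \<Longrightarrow> subspace W \<Longrightarrow> W \<subseteq> E \<Longrightarrow>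
      \<rho> (span (V \<union> W)) + \<rho> (V \<inter> W) \<le> \<rho> V + \<rho> W"
  and E1def: "E1 = {x \<in> E. \<forall>W. subspace W \<and> W \<subseteq> E \<and> span (insert x W) = E \<longrightarrow> \<rho> W = \<rho> E}"
  and ds: "subspace E1" "E1 \<subseteq> E" "subspace E2" "E2 \<subseteq> E" "E1 \<inter> E2 = {0}" "span (E1 \<union> E2) = E"
begin

lemma fd: "V \<subseteq> E \<Longrightarrow> V \<subseteq> span B0" using B0 by auto

lemma rho0: "\<rho> {0} = 0"
  using dimle[of "{0}"] dim_zero subspace_0[OF subE] by auto

lemma span_sub: "A \<subseteq> E \<Longrightarrow> span A \<subseteq> E"
  using span_minimal subE by blast

lemma unit:
  assumes "subspace S" "S \<subseteq> E" "b \<in> E"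
  shows "\<rho> (span (insert b S)) \<le> \<rho> S + 1"
proof -
  have sb: "subspace (span {b})" "span {b} \<subseteq> E" using assms span_sub by auto
  have h: "\<rho> (span (S \<union> span {b})) + \<rho> (S \<inter> span {b}) \<le> \<rho> S + \<rho> (span {b})"
    using submod assms sb by blast
  have eq: "span (S \<union> span {b}) = span (insert b S)"
    using span_insert_subspace[OF assms(1)] by simp
  have h2: "\<rho> (span (insert b S)) \<le> \<rho> S + \<rho> (span {b})"
    using h[unfolded eq] by linarith
  moreover have "\<rho> (span {b}) \<le> 1"
  proof -
    have "\<rho> (span {b}) \<le> dim (span {b})" using dimle sb by blast
    also have "\<dots> = dim {b}" by simp
    also have "\<dots> \<le> card {b}" using dim_le_card[of "{b}" "{b}"] span_superset by blast
    finally show ?thesis by simp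
  qed
  ultimately show ?thesis by linarith
qed

lemma A_ineq:
  assumes "subspace X" "X \<subseteq> V" "subspace V" "V \<subseteq> E"
  shows "\<rho> V + dim X \<le> \<rho> X + dim V"
proof -
  obtain BX BV where B: "BX \<subseteq> BV" "BX \<subseteq> X" "BV \<subseteq> V" "independent BV" "X \<subseteq> span BX"
     "V \<subseteq> span BV" "finite BV" "card BX = dim X" "card BV = dim V"
    using extend_fin[OF assms(2) fd[OF assms(4)] B0(1)] by blast
  have spX: "span BX = X" using B(2,5) assms(1) span_subspace by blast
  have spV: "span BV = V" using B(3,6) assms(3) span_subspace by blast
  have step: "D \<subseteq> BV - BX \<Longrightarrow> \<rho> (span (BX \<union> D)) \<le> \<rho> X + card D" for D
  proof -
    assume DD: "D \<subseteq> BV - BX"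
    have "finite D" using DD B(7) finite_subset by blast
    then show ?thesis using DD
    proof (induction D rule: finite_induct)
      case empty then show ?case using spX by simp
    next
      case (insert b D)
      have bE: "b \<in> E" using insert B(3) assms(4) by auto
      have sub: "span (BX \<union> D) \<subseteq> E" using insert B(3) assms(4) B(1)
        by (intro span_sub) auto
      have e1: "span ({b} \<union> span (BX \<union> D)) = span ({b} \<union> (BX \<union> D))" by (rule span_union_span)
      have e2: "BX \<union> insert b D = {b} \<union> (BX \<union> D)" by auto
      have "span (BX \<union> insert b D) = span (insert b (span (BX \<union> D)))"
        unfolding e2 using e1 by simp
      then have "\<rho> (span (BX \<union> insert b D)) \<le> \<rho> (span (BX \<union> D)) + 1"
        using unit[OF subspace_span sub bE] by simp
      then show ?case using insert by simp
    qed
  qed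
  have "\<rho> (span (BX \<union> (BV - BX))) \<le> \<rho> X + card (BV - BX)" using step by blast
  moreover have "BX \<union> (BV - BX) = BV" using B(1) by auto
  moreover have "card (BV - BX) = card BV - card BX" using B(1,7) card_Diff_subset finite_subset by blast
  moreover have "card BX \<le> card BV" using B(1,7) card_mono by blast
  ultimately show ?thesis using spV B(8,9) by simp
qed

lemma sum_le:
  assumes "subspace A" "A \<subseteq> E" "subspace C" "C \<subseteq> E"
  shows "\<rho> (span (A \<union> C)) \<le> \<rho> A + \<rho> C"
  using submod[OF assms] by linarith

lemma bad:
  assumes "x \<in> E" "x \<notin> E1"
  obtains W where "subspace W" "W \<subseteq> E" "span (insert x W) = E" "\<rho> W < \<rho> E" "x \<notin> W"
proof -
  obtain W where W: "subspace W" "W \<subseteq> E" "span (insert x W) = E" "\<rho> W \<noteq> \<rho> E"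
    using assms E1def by blast
  have "\<rho> W \<le> \<rho> E" using mono W subE by blast
  moreover have "x \<notin> W"
  proof
    assume "x \<in> W"
    then have "span (insert x W) = W" using W(1) by (simp add: insert_absorb)
    then show False using W by simp
  qed
  ultimately show ?thesis using that W by auto
qed

lemma span_insert_sub:
  assumes "subspace W" "u \<in> span (insert y W)"
  shows "\<exists>k. u - scale k y \<in> W"
proof -
  have hs: "span W = W" using assms(1) by simp
  show ?thesis using assms(2) span_insert[of y W] hs by auto
qed

lemma hyp:
  assumes "subspace W" "W \<subseteq> E" "span (insert x W) = E" "y \<in> E" "y \<notin> W"
  shows "span (insert y W) = E"
proof
  show "span (insert y W) \<subseteq> E" using assms span_sub by auto
  obtain k where k: "y - scale k x \<in> W" using span_insert_sub assms(1,3,4) by blast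
  have k0: "k \<noteq> 0" using k assms(5) by auto
  have "x = scale (inverse k) (y - (y - scale k x))" using k0 by simp
  moreover have "y - (y - scale k x) \<in> span (insert y W)"
    using k by (meson insert_iff span_base span_diff subsetD subset_insertI span_mono)
  ultimately have "x \<in> span (insert y W)" by (metis span_scale)
  then have "insert x W \<subseteq> span (insert y W)" using span_superset by blast
  then show "E \<subseteq> span (insert y W)" using assms(3)
    by (metis span_minimal subspace_span)
qed

lemma E1_sub_bad:
  assumes "subspace W" "W \<subseteq> E" "span (insert x W) = E" "\<rho> W < \<rho> E"
  shows "E1 \<subseteq> W"
proof
  fix y assume y: "y \<in> E1"
  show "y \<in> W"
  proof (rule ccontr)
    assume "y \<notin> W"
    then have "span (insert y W) = E" using hyp assms y ds(2) by blast
    then have "\<rho> W = \<rho> E" using y E1def assms by blast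
    then show False using assms by simp
  qed
qed

lemma drop:
  assumes "subspace W" "W \<subseteq> E" "span (insert x W) = E" "\<rho> W < \<rho> E"
    and "subspace U" "U \<subseteq> E" "\<not> U \<subseteq> W"
  shows "\<rho> (U \<inter> W) + 1 \<le> \<rho> U"
proof -
  obtain u where u: "u \<in> U" "u \<notin> W" using assms by blast
  have "span (insert u W) = E" using hyp assms u by blast
  moreover have "span (insert u W) \<subseteq> span (U \<union> W)" using u by (intro span_mono) auto
  moreover have "span (U \<union> W) \<subseteq> E" using assms span_sub by auto
  ultimately have "span (U \<union> W) = E" by auto
  then have "\<rho> E + \<rho> (U \<inter> W) \<le> \<rho> U + \<rho> W" using submod assms by metis
  then show ?thesis using assms(4) by linarith
qed

lemma chain: "\<rho> E1 + dim E \<le> \<rho> E + dim E1"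
proof -
  define P where "P U \<longleftrightarrow> subspace U \<and> E1 \<subseteq> U \<and> U \<subseteq> E \<and> \<rho> U + dim E \<le> \<rho> E + dim U" for U
  have "P E" unfolding P_def using subE ds by auto
  define U0 where "U0 = arg_min dim P"
  have U0: "P U0" "\<And>U. P U \<Longrightarrow> dim U0 \<le> dim U"
    using arg_min_nat_lemma[of P E dim, OF \<open>P E\<close>] unfolding U0_def by auto
  have "U0 = E1"
  proof (rule ccontr)
    assume "U0 \<noteq> E1"
    then obtain y where y: "y \<in> U0" "y \<notin> E1" using U0(1) P_def by blast
    have yE: "y \<in> E" using y U0(1) P_def by blast
    obtain W where W: "subspace W" "W \<subseteq> E" "span (insert y W) = E" "\<rho> W < \<rho> E" "y \<notin> W"
      using bad[OF yE y(2)] by blast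
    have sU0: "subspace U0" "U0 \<subseteq> E" "E1 \<subseteq> U0" using U0(1) P_def by auto
    define U' where "U' = U0 \<inter> W"
    have sU': "subspace U'" "U' \<subseteq> E" "E1 \<subseteq> U'"
      using subspace_inter[OF sU0(1) W(1)] E1_sub_bad[OF W(1-4)] sU0 unfolding U'_def by auto
    have r: "\<rho> U' + 1 \<le> \<rho> U0" using drop[OF W(1-4) sU0(1,2)] y W(5) unfolding U'_def by blast
    have "U0 \<subseteq> span (insert y U')"
    proof
      fix u assume u: "u \<in> U0"
      then have "u \<in> span (insert y W)" using W(3) sU0 by auto
      then obtain k where k: "u - scale k y \<in> W" using span_insert_sub W(1) by blast
      have "u - scale k y \<in> U0" using u y sU0(1) subspace_diff subspace_scale by blast
      then have "u - scale k y \<in> span U'" using k U'_def span_base by blast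
      then show "u \<in> span (insert y U')" using span_insert[of y U'] by blast
    qed
    then have "dim U0 \<le> dim (insert y U')"
      using dim_mono_fd[of U0 "insert y U'" B0] fd sU' yE B0(1) by blast
    also have "\<dots> \<le> dim U' + 1" using dim_insert_le fd[OF sU'(2)] B0(1) by blast
    finally have d1: "dim U0 \<le> dim U' + 1" .
    have "P U'" using sU' r d1 U0(1) unfolding P_def by auto
    moreover have "dim U' < dim U0"
    proof -
      have hs: "span U' = U'" using sU'(1) by simp
      have yU: "y \<notin> U'" unfolding U'_def using W(5) by blast
      have "y \<notin> span U'" using yU hs by blast
      moreover have "U' \<subseteq> U0" using U'_def by auto
      ultimately show ?thesis using dim_insert_less[of U' U0 y B0] sU0 y fd B0(1) by blast
    qed
    ultimately show False using U0(2) by fastforce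
  qed
  then show ?thesis using U0(1) P_def by blast
qed

lemma K:
  assumes "subspace V" "V \<subseteq> E"
  shows "\<rho> (V \<inter> E1) + dim V \<le> \<rho> V + dim (V \<inter> E1)"
proof -
  have m: "dim V + dim E1 \<le> dim (span (V \<union> E1)) + dim (V \<inter> E1)"
    using dim_modular[OF assms(1) ds(1) fd[OF assms(2)] fd[OF ds(2)] B0(1)] .
  have sVE: "subspace (span (V \<union> E1))" "span (V \<union> E1) \<subseteq> E" using assms ds span_sub by auto
  have a: "\<rho> E + dim (span (V \<union> E1)) \<le> \<rho> (span (V \<union> E1)) + dim E"
    using A_ineq[OF sVE(1) sVE(2) subE] by simp
  have s: "\<rho> (span (V \<union> E1)) + \<rho> (V \<inter> E1) \<le> \<rho> V + \<rho> E1"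
    using submod assms ds by blast
  show ?thesis using m a s chain by linarith
qed


lemma decomp: "v \<in> E \<Longrightarrow> \<exists>a\<in>E1. \<exists>b\<in>E2. v = a + b"
proof -
  assume v: "v \<in> E"
  have h: "span E1 = E1" "span E2 = E2" using ds(1,3) by simp_all
  show ?thesis using v ds(6) span_Un[of E1 E2] unfolding h by blast
qed

lemma uniq:
  assumes "a \<in> E1" "a' \<in> E1" "b \<in> E2" "b' \<in> E2" "a + b = a' + b'"
  shows "a = a' \<and> b = b'"
proof -
  have "a - a' = b' - b" using assms(5) by (simp add: algebra_simps)
  moreover have "a - a' \<in> E1" using assms ds(1) subspace_diff by blast
  moreover have "b' - b \<in> E2" using assms ds(3) subspace_diff by blast
  ultimately have "a - a' \<in> E1 \<inter> E2" by simp
  then have z: "a - a' = 0" using ds(5) by blast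
  then have "a = a'" by simp
  then show ?thesis using assms(5) by simp
qed

lemma proj_char:
  assumes "a \<in> E1" "b \<in> E2"
  shows "qproj1 E1 E2 (a + b) = a" "qproj2 E1 E2 (a + b) = b"
proof -
  show "qproj1 E1 E2 (a + b) = a" unfolding qproj1_def
    by (rule the_equality) (use assms uniq in blast)+
  show "qproj2 E1 E2 (a + b) = b" unfolding qproj2_def
    by (rule the_equality) (use assms uniq in blast)+
qed

lemma proj_mem:
  assumes "v \<in> E"
  shows "qproj1 E1 E2 v \<in> E1" "qproj2 E1 E2 v \<in> E2" "v = qproj1 E1 E2 v + qproj2 E1 E2 v"
  using decomp[OF assms] proj_char by auto

lemma proj_lin:
  assumes "x \<in> E" "y \<in> E"
  shows "qproj1 E1 E2 (x + y) = qproj1 E1 E2 x + qproj1 E1 E2 y"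
    "qproj2 E1 E2 (x + y) = qproj2 E1 E2 x + qproj2 E1 E2 y"
    "qproj1 E1 E2 (scale c x) = scale c (qproj1 E1 E2 x)"
    "qproj2 E1 E2 (scale c x) = scale c (qproj2 E1 E2 x)"
proof -
  obtain a b where ab: "a \<in> E1" "b \<in> E2" "x = a + b" using decomp assms by blast
  obtain a' b' where ab': "a' \<in> E1" "b' \<in> E2" "y = a' + b'" using decomp assms by blast
  have e: "x + y = (a + a') + (b + b')" using ab ab' by (simp add: algebra_simps)
  have m: "a + a' \<in> E1" "b + b' \<in> E2" using ab ab' ds(1,3) subspace_add by auto
  show "qproj1 E1 E2 (x + y) = qproj1 E1 E2 x + qproj1 E1 E2 y"
    "qproj2 E1 E2 (x + y) = qproj2 E1 E2 x + qproj2 E1 E2 y"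
  proof -
    have "qproj1 E1 E2 (x + y) = a + a'" "qproj2 E1 E2 (x + y) = b + b'"
      unfolding e using proj_char[OF m] by auto
    moreover have "qproj1 E1 E2 x = a" "qproj2 E1 E2 x = b"
      unfolding ab(3) using proj_char[OF ab(1,2)] by auto
    moreover have "qproj1 E1 E2 y = a'" "qproj2 E1 E2 y = b'"
      unfolding ab'(3) using proj_char[OF ab'(1,2)] by auto
    ultimately show "qproj1 E1 E2 (x + y) = qproj1 E1 E2 x + qproj1 E1 E2 y"
      "qproj2 E1 E2 (x + y) = qproj2 E1 E2 x + qproj2 E1 E2 y" by auto
  qed
  have e2: "scale c x = scale c a + scale c b" using ab by (simp add: scale_right_distrib)
  have m2: "scale c a \<in> E1" "scale c b \<in> E2" using ab ds(1,3) subspace_scale by auto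
  show "qproj1 E1 E2 (scale c x) = scale c (qproj1 E1 E2 x)"
    "qproj2 E1 E2 (scale c x) = scale c (qproj2 E1 E2 x)"
  proof -
    have "qproj1 E1 E2 (scale c x) = scale c a" "qproj2 E1 E2 (scale c x) = scale c b"
      unfolding e2 using proj_char[OF m2] by auto
    moreover have "qproj1 E1 E2 x = a" "qproj2 E1 E2 x = b"
      unfolding ab(3) using proj_char[OF ab(1,2)] by auto
    ultimately show "qproj1 E1 E2 (scale c x) = scale c (qproj1 E1 E2 x)"
      "qproj2 E1 E2 (scale c x) = scale c (qproj2 E1 E2 x)" by auto
  qed
qed

lemma proj_img:
  assumes "subspace X" "X \<subseteq> E"
  shows "subspace (qproj1 E1 E2 ` X)" "qproj1 E1 E2 ` X \<subseteq> E"
    "subspace (qproj2 E1 E2 ` X)" "qproj2 E1 E2 ` X \<subseteq> E"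
    "X \<subseteq> span (qproj1 E1 E2 ` X \<union> qproj2 E1 E2 ` X)"
proof -
  have z: "qproj1 E1 E2 0 = 0" "qproj2 E1 E2 0 = 0"
    using proj_char[of 0 0] ds subspace_0 by auto
  show "subspace (qproj1 E1 E2 ` X)"
  proof (rule subspaceI)
    show "0 \<in> qproj1 E1 E2 ` X" using z assms subspace_0 by force
    show "x + y \<in> qproj1 E1 E2 ` X" if "x \<in> qproj1 E1 E2 ` X" "y \<in> qproj1 E1 E2 ` X" for x y
      using that proj_lin(1) assms subspace_add by (smt (verit) image_iff subsetD)
    show "scale c x \<in> qproj1 E1 E2 ` X" if "x \<in> qproj1 E1 E2 ` X" for c x
      using that proj_lin(3) assms subspace_scale by (smt (verit) image_iff subsetD)
  qed
  show "subspace (qproj2 E1 E2 ` X)"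
  proof (rule subspaceI)
    show "0 \<in> qproj2 E1 E2 ` X" using z assms subspace_0 by force
    show "x + y \<in> qproj2 E1 E2 ` X" if "x \<in> qproj2 E1 E2 ` X" "y \<in> qproj2 E1 E2 ` X" for x y
      using that proj_lin(2) assms subspace_add by (smt (verit) image_iff subsetD)
    show "scale c x \<in> qproj2 E1 E2 ` X" if "x \<in> qproj2 E1 E2 ` X" for c x
      using that proj_lin(4) assms subspace_scale by (smt (verit) image_iff subsetD)
  qed
  show "qproj1 E1 E2 ` X \<subseteq> E" "qproj2 E1 E2 ` X \<subseteq> E" using proj_mem assms ds by blast+
  show "X \<subseteq> span (qproj1 E1 E2 ` X \<union> qproj2 E1 E2 ` X)"
  proof
    fix x assume x: "x \<in> X"
    then have "x = qproj1 E1 E2 x + qproj2 E1 E2 x" using proj_mem assms by blast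
    moreover have "qproj1 E1 E2 x \<in> span (qproj1 E1 E2 ` X \<union> qproj2 E1 E2 ` X)"
      by (rule span_base) (use x in blast)
    moreover have "qproj2 E1 E2 x \<in> span (qproj1 E1 E2 ` X \<union> qproj2 E1 E2 ` X)"
      by (rule span_base) (use x in blast)
    ultimately show "x \<in> span (qproj1 E1 E2 ` X \<union> qproj2 E1 E2 ` X)" by (metis span_add)
  qed
qed

lemma partA: "is_free_qmatroid scale E2 \<rho>"
  unfolding is_free_qmatroid_def qsubsp_def qdim_def
proof (intro allI impI)
  fix V assume V: "subspace V \<and> V \<subseteq> E2"
  then have VE: "subspace V" "V \<subseteq> E" using ds by auto
  have "V \<inter> E1 = {0}" using V ds(5) subspace_0 by auto
  then have "dim V \<le> \<rho> V" using K[OF VE] rho0 dim_zero by simp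
  then show "\<rho> V = dim V" using dimle VE by (simp add: le_antisym)
qed

lemma restrict_hyp:
  assumes "subspace W" "span (insert y W) = E" "subspace U" "U \<subseteq> E" "y \<in> U"
  shows "span (insert y (U \<inter> W)) = U"
proof
  show "span (insert y (U \<inter> W)) \<subseteq> U" using assms span_minimal[of "insert y (U \<inter> W)" U] by blast
  show "U \<subseteq> span (insert y (U \<inter> W))"
  proof
    fix u assume u: "u \<in> U"
    then have "u \<in> span (insert y W)" using assms by auto
    then obtain k where k: "u - scale k y \<in> W"
      using span_insert_sub assms(1) by blast
    have "u - scale k y \<in> U" using u assms subspace_diff subspace_scale by blast
    then have "u - scale k y \<in> span (U \<inter> W)" using k span_base by blast
    then show "u \<in> span (insert y (U \<inter> W))" using span_insert[of y "U \<inter> W"] by blast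
  qed
qed

lemma qplus_eq: "subspace W \<Longrightarrow> qplus scale W (span {x}) = span (insert x W)"
  unfolding qplus_def using span_insert_subspace by simp

lemma partB: "qcyclic_flats scale E \<rho> = qcyclic_flats scale E1 \<rho>"
proof (rule set_eqI, rule iffI)
  fix F assume "F \<in> qcyclic_flats scale E \<rho>"
  then have F: "subspace F" "F \<subseteq> E" "\<forall>x\<in>E - F. \<rho> (span (insert x F)) > \<rho> F"
      "qcyc scale \<rho> F = F"
    unfolding qcyclic_flats_def qflat_def qcyclic_def qsubsp_def using qplus_eq by auto
  have FE1: "F \<subseteq> E1"
  proof
    fix x assume x: "x \<in> F"
    show "x \<in> E1"
    proof (rule ccontr)
      assume nx: "x \<notin> E1"
      have xE: "x \<in> E" using x F by auto
      obtain W where W: "subspace W" "W \<subseteq> E" "span (insert x W) = E" "\<rho> W < \<rho> E" "x \<notin> W"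
        using bad[OF xE nx] by blast
      have r: "\<rho> (F \<inter> W) + 1 \<le> \<rho> F" using drop[OF W(1-4) F(1,2)] x W(5) by blast
      have "span (insert x (F \<inter> W)) = F" using restrict_hyp W F x by blast
      then have "qplus scale (F \<inter> W) (span {x}) = F" using qplus_eq subspace_inter W F by metis
      moreover have "x \<in> qcyc scale \<rho> F" using F x by simp
      ultimately have "\<rho> (F \<inter> W) = \<rho> F" unfolding qcyc_def using subspace_inter[OF F(1) W(1)] by blast
      then show False using r by simp
    qed
  qed
  show "F \<in> qcyclic_flats scale E1 \<rho>"
    unfolding qcyclic_flats_def qflat_def qcyclic_def qsubsp_def
    using F FE1 qplus_eq ds(2) by auto
next
  fix F assume "F \<in> qcyclic_flats scale E1 \<rho>"
  then have F: "subspace F" "F \<subseteq> E1" "\<forall>x\<in>E1 - F. \<rho> (span (insert x F)) > \<rho> F"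
      "qcyc scale \<rho> F = F"
    unfolding qcyclic_flats_def qflat_def qcyclic_def qsubsp_def using qplus_eq by auto
  have FE: "F \<subseteq> E" using F ds by auto
  have fl: "\<rho> (span (insert x F)) > \<rho> F" if x: "x \<in> E - F" for x
  proof (cases "x \<in> E1")
    case True then show ?thesis using F x by blast
  next
    case False
    obtain W where W: "subspace W" "W \<subseteq> E" "span (insert x W) = E" "\<rho> W < \<rho> E" "x \<notin> W"
      using bad[OF _ False] x by blast
    have FW: "F \<subseteq> W" using E1_sub_bad[OF W(1-4)] F by auto
    define U where "U = span (insert x F)"
    have U: "subspace U" "U \<subseteq> E" using x FE span_sub unfolding U_def by auto
    have xU: "x \<in> U" unfolding U_def by (simp add: span_base)
    have r: "\<rho> (U \<inter> W) + 1 \<le> \<rho> U" using drop[OF W(1-4) U] xU W(5) by blast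
    have "F \<subseteq> U \<inter> W" using FW span_superset unfolding U_def by blast
    then have "\<rho> F \<le> \<rho> (U \<inter> W)" using mono F(1) subspace_inter[OF U(1) W(1)] U(2) by blast
    then show ?thesis using r unfolding U_def by simp
  qed
  show "F \<in> qcyclic_flats scale E \<rho>"
    unfolding qcyclic_flats_def qflat_def qcyclic_def qsubsp_def
    using F FE fl qplus_eq by auto
qed


lemma partC: "qdirect_sum scale E E1 E2 \<Longrightarrow> is_qmatroid_direct_sum scale E \<rho> E1 \<rho> E2 \<rho>"
  unfolding is_qmatroid_direct_sum_def
proof (intro conjI allI impI)
  fix V assume "qsubsp scale E V"
  then have V: "subspace V" "V \<subseteq> E" unfolding qsubsp_def by auto
  let ?f = "\<lambda>X. int (\<rho> (qproj1 E1 E2 ` X)) + int (\<rho> (qproj2 E1 E2 ` X)) - int (qdim scale X)"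
  let ?S = "{?f X | X. qsubsp scale V X}"
  have lower: "int (\<rho> V) - int (dim V) \<le> ?f X" if X: "subspace X" "X \<subseteq> V" for X
  proof -
    have XE: "X \<subseteq> E" using X V by auto
    note P = proj_img[OF X(1) XE]
    have a: "\<rho> V + dim X \<le> \<rho> X + dim V" using A_ineq X V by blast
    have "\<rho> X \<le> \<rho> (span (qproj1 E1 E2 ` X \<union> qproj2 E1 E2 ` X))"
      using mono[OF X(1) subspace_span] P span_sub by (metis Un_least)
    also have "\<dots> \<le> \<rho> (qproj1 E1 E2 ` X) + \<rho> (qproj2 E1 E2 ` X)" using sum_le P by blast
    finally show ?thesis using a unfolding qdim_def by linarith
  qed
  have upper: "?f X \<le> 2 * int (\<rho> E)" if X: "subspace X" "X \<subseteq> V" for X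
  proof -
    have XE: "X \<subseteq> E" using X V by auto
    note P = proj_img[OF X(1) XE]
    have "\<rho> (qproj1 E1 E2 ` X) \<le> \<rho> E" "\<rho> (qproj2 E1 E2 ` X) \<le> \<rho> E"
      using mono P subE by blast+
    then show ?thesis by linarith
  qed
  have fin: "finite ?S"
  proof (rule finite_subset)
    show "?S \<subseteq> {int (\<rho> V) - int (dim V) .. 2 * int (\<rho> E)}"
      using lower upper unfolding qsubsp_def by fastforce
  qed simp
  define X0 where "X0 = V \<inter> E1"
  have X0: "subspace X0" "X0 \<subseteq> V" "X0 \<subseteq> E1" using subspace_inter V ds unfolding X0_def by auto
  have p1: "qproj1 E1 E2 ` X0 = X0"
  proof -
    have "qproj1 E1 E2 x = x" if "x \<in> X0" for x
      using proj_char(1)[of x 0] that X0 ds subspace_0 by auto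
    then show ?thesis by (simp add: image_cong)
  qed
  have p2: "qproj2 E1 E2 ` X0 = {0}"
  proof -
    have "qproj2 E1 E2 x = 0" if "x \<in> X0" for x
      using proj_char(2)[of x 0] that X0 ds subspace_0 by auto
    moreover have "X0 \<noteq> {}" using X0 subspace_0 by auto
    ultimately show ?thesis by auto
  qed
  have "?f X0 = int (\<rho> X0) - int (dim X0)" using p1 p2 rho0 unfolding qdim_def by simp
  also have "\<dots> = int (\<rho> V) - int (dim V)"
    using K[OF V] A_ineq[OF X0(1,2) V] unfolding X0_def by linarith
  finally have mem: "int (\<rho> V) - int (dim V) \<in> ?S" using X0 unfolding qsubsp_def by force
  have "Min ?S = int (\<rho> V) - int (dim V)"
    by (rule Min_eqI[OF fin _ mem]) (use lower in \<open>auto simp: qsubsp_def\<close>)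
  then show "int (\<rho> V) = int (qdim scale V) + Min ?S" unfolding qdim_def by simp
qed simp

end

theorem proposition7p5:
  fixes scale :: "'f::field \<Rightarrow> 'v::ab_group_add \<Rightarrow> 'v"
    and E E1 E2 :: "'v set" and \<rho> :: "'v set \<Rightarrow> nat"
  assumes "is_qmatroid scale E \<rho>"
    and "E1 = qcyc scale \<rho> E"
    and "qdirect_sum scale E E1 E2"
  shows "is_free_qmatroid scale E2 \<rho> \<and>
         qcyclic_flats scale E \<rho> = qcyclic_flats scale E1 \<rho> \<and>
         is_qmatroid_direct_sum scale E \<rho> E1 \<rho> E2 \<rho>"
proof -
  have vs: "vector_space scale" using assms(1) unfolding is_qmatroid_def by blast
  interpret vector_space scale by (rule vs)
  obtain B where B: "finite B" "span B = E" using assms(1) unfolding is_qmatroid_def by blast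
  have subE: "subspace E" using assms(1) unfolding is_qmatroid_def by blast
  have ax: "\<And>V. subspace V \<Longrightarrow> V \<subseteq> E \<Longrightarrow> \<rho> V \<le> dim V"
    "\<And>V W. subspace V \<Longrightarrow> subspace W \<Longrightarrow> W \<subseteq> E \<Longrightarrow> V \<subseteq> W \<Longrightarrow> \<rho> V \<le> \<rho> W"
    "\<And>V W. subspace V \<Longrightarrow> V \<subseteq> E \<Longrightarrow> subspace W \<Longrightarrow> W \<subseteq> E \<Longrightarrow>
      \<rho> (span (V \<union> W)) + \<rho> (V \<inter> W) \<le> \<rho> V + \<rho> W"
    using assms(1) unfolding is_qmatroid_def qsubsp_def qdim_def qplus_def by (meson order_trans)+
  have E1d: "E1 = {x \<in> E. \<forall>W. subspace W \<and> W \<subseteq> E \<and> span (insert x W) = E \<longrightarrow> \<rho> W = \<rho> E}"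
    unfolding assms(2) qcyc_def qplus_def using span_insert_subspace by auto
  have ds: "subspace E1" "E1 \<subseteq> E" "subspace E2" "E2 \<subseteq> E" "E1 \<inter> E2 = {0}" "span (E1 \<union> E2) = E"
    using assms(3) unfolding qdirect_sum_def qsubsp_def qplus_def by auto
  interpret qm scale E E1 E2 \<rho> B
    by (unfold_locales; (rule B ax E1d ds subE)?; assumption?)
  show ?thesis using partA partB partC assms(3) by blast
qed


end
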